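(* Assume $\omega=\{\omega_n\}_{n\ge1}$ is IID with law $\mathbb P$ satisfying the deviation inequality above the mean with constant $C$. Let $\lambda\ge0$, $h\ge0$, $N\in2\mathbb N$, $m\in\{0,2,\dots,N\}$, and let $\Omega_m$ be a set of walk paths with $\mathbf P(\Omega_m)>0$ such that $\mathcal N=m$ for every $S\in\Omega_m$. Then for every $u\ge0$, $$\mathbb P\Big(\textsc{f}_{N,\omega}(\Omega_m)-\mathbb E[\textsc{f}_{N,\omega}(\Omega_m)]\ge u\Big)\le C\exp\Big(-\frac{u^2N^2}{4C\lambda^2m}\Big).$$
   Context: $S=\{S_n\}_{n\ge0}$ is the simple symmetric random walk on $\mathbb Z$ started at $0$, law $\mathbf P$, expectation $\mathbf E$. Set $\mathrm{sign}(S_{2n}):=\mathrm{sign}(S_{2n-1})$ whenever $S_{2n}=0$, $\Delta_n=(1-\mathrm{sign}(S_n))/2$, $\mathcal N=\sum_{n=1}^N\Delta_n$. For a set of paths $\tilde\Omega$, $Z_{N,\omega}(\tilde\Omega)=\mathbf E\big[\exp\big(-2\lambda\sum_{n=1}^N(\omega_n+h)\Delta_n\big);\tilde\Omega\big]$ and $\textsc{f}_{N,\omega}(\tilde\Omega)=\frac1N\log Z_{N,\omega}(\tilde\Omega)$. Deviation inequality above the mean: there is $C>0$ such that for every $N$, every convex Lipschitz $g:\mathbb R^N\to\mathbb R$ with $g(\omega_1,\dots,\omega_N)\in L^1(\mathbb P)$ and every $t\ge0$, $\mathbb P(g(\omega)-\mathbb E[g(\omega)]\ge t)\le C\exp(-t^2/(C\|g\|_{\rm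 Lip}^2))$, with $\|g\|_{\rm Lip}$ the Lipschitz constant w.r.t. the Euclidean distance. *)

theory Defs
  imports "HOL-Probability.Probability"
begin

text \<open>Walk paths are encoded by their infinite step sequences X :: nat => int
  (X k is the (k+1)-th step, in {-1,1}); the law of the walk is the infinite product
  of fair coin flips.\<close>

definition walk_law :: "(nat \<Rightarrow> int) measure" where
  "walk_law = PiM UNIV (\<lambda>_. measure_pmf (pmf_of_set {-1::int, 1}))"

definition walk :: "(nat \<Rightarrow> int) \<Rightarrow> nat \<Rightarrow> int" where
  "walk X n = (\<Sum>k<n. X k)"

definition walk_sign :: "(nat \<Rightarrow> int) \<Rightarrow> nat \<Rightarrow> int" where
  "walk_sign X n = (if walk X n \<noteq> 0 then sgn (walk X n) else sgn (walk X (n - 1)))"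

definition Delta :: "(nat \<Rightarrow> int) \<Rightarrow> nat \<Rightarrow> real" where
  "Delta X n = (1 - real_of_int (walk_sign X n)) / 2"

definition calN :: "nat \<Rightarrow> (nat \<Rightarrow> int) \<Rightarrow> real" where
  "calN N X = (\<Sum>n=1..N. Delta X n)"

definition Zpart :: "real \<Rightarrow> real \<Rightarrow> nat \<Rightarrow> (nat \<Rightarrow> real) \<Rightarrow> (nat \<Rightarrow> int) set \<Rightarrow> real" where
  "Zpart lam h N \<omega> \<Omega>' =
     (\<integral>X. indicator \<Omega>' X * exp (- 2 * lam * (\<Sum>n=1..N. (\<omega> n + h) * Delta X n)) \<partial>walk_law)"

definition free_energy :: "real \<Rightarrow> real \<Rightarrow> nat \<Rightarrow> (nat \<Rightarrow> real) \<Rightarrow> (nat \<Rightarrow> int) set \<Rightarrow> real" where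
  "free_energy lam h N \<omega> \<Omega>' = ln (Zpart lam h N \<omega> \<Omega>') / real N"

text \<open>The disorder \<omega> = (\<omega>_n)_{n\<ge>1} is IID with law \<mu>: its joint law is the infinite
  product of \<mu> (coordinate 0 is unused).\<close>
definition disorder_law :: "real measure \<Rightarrow> (nat \<Rightarrow> real) measure" where
  "disorder_law \<mu> = PiM UNIV (\<lambda>_. \<mu>)"

definition depends_only_on :: "nat \<Rightarrow> ((nat \<Rightarrow> real) \<Rightarrow> real) \<Rightarrow> bool" where
  "depends_only_on N g \<longleftrightarrow> (\<forall>x y. (\<forall>i\<in>{1..N}. x i = y i) \<longrightarrow> g x = g y)"

definition convex_fun :: "((nat \<Rightarrow> real) \<Rightarrow> real) \<Rightarrow> bool" where
  "convex_fun g \<longleftrightarrow> (\<forall>x y t. 0 \<le> t \<and> t \<le> 1 \<longrightarrow>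
      g (\<lambda>i. t * x i + (1 - t) * y i) \<le> t * g x + (1 - t) * g y)"

definition lipschitz_N :: "nat \<Rightarrow> real \<Rightarrow> ((nat \<Rightarrow> real) \<Rightarrow> real) \<Rightarrow> bool" where
  "lipschitz_N N L g \<longleftrightarrow> (\<forall>x y. \<bar>g x - g y\<bar> \<le> L * sqrt (\<Sum>i=1..N. (x i - y i)^2))"

definition deviation_above_mean :: "real measure \<Rightarrow> real \<Rightarrow> bool" where
  "deviation_above_mean \<mu> C \<longleftrightarrow> C > 0 \<and>
     (\<forall>N g L t. depends_only_on N g \<and> convex_fun g \<and> L > 0 \<and> lipschitz_N N L g \<and>
        integrable (disorder_law \<mu>) g \<and> t \<ge> 0 \<longrightarrow>
        measure (disorder_law \<mu>) {\<omega> \<in> space (disorder_law \<mu>).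
            g \<omega> - (\<integral>\<omega>'. g \<omega>' \<partial>disorder_law \<mu>) \<ge> t}
          \<le> C * exp (- (t\<^sup>2) / (C * L\<^sup>2)))"

end

theory Submission imports Defs begin

lemma walk_law_prob: "prob_space walk_law"
  unfolding walk_law_def by (intro prob_space_PiM) (simp add: prob_space_measure_pmf)

lemma coord_meas: "(\<lambda>X. f (X k)) \<in> borel_measurable walk_law"
proof -
  have "(\<lambda>X. X k) \<in> measurable walk_law (measure_pmf (pmf_of_set {-1::int, 1}))"
    unfolding walk_law_def by (rule measurable_component_singleton) simp
  moreover have "f \<in> borel_measurable (measure_pmf (pmf_of_set {-1::int, 1}))"
    by simp
  ultimately show ?thesis by (rule measurable_compose)
qed

lemma walk_meas: "(\<lambda>X. real_of_int (walk X n)) \<in> borel_measurable walk_law"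
  unfolding walk_def of_int_sum by (intro borel_measurable_sum coord_meas)

lemma Delta_meas: "(\<lambda>X. Delta X n) \<in> borel_measurable walk_law"
proof -
  have e: "(\<lambda>X. Delta X n) = (\<lambda>X. (1 - (if real_of_int (walk X n) \<noteq> 0 then sgn (real_of_int (walk X n))
       else sgn (real_of_int (walk X (n - 1))))) / 2)"
    by (rule ext) (simp add: Delta_def walk_sign_def sgn_if)
  show ?thesis unfolding e using walk_meas by measurable
qed

lemma Delta_bounds: "0 \<le> Delta X n" "Delta X n \<le> 1"
  unfolding Delta_def walk_sign_def by (auto simp: sgn_if)


definition Aen :: "real \<Rightarrow> real \<Rightarrow> nat \<Rightarrow> (nat \<Rightarrow> real) \<Rightarrow> (nat \<Rightarrow> int) \<Rightarrow> real" where
  "Aen lam h N x X = - 2 * lam * (\<Sum>n=1..N. (x n + h) * Delta X n)"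

locale S =
  fixes lam h :: real and N m :: nat and Om :: "(nat \<Rightarrow> int) set"
  assumes lam: "lam \<ge> 0" and Om: "Om \<in> sets walk_law" and Ompos: "measure walk_law Om > 0"
    and calN: "\<forall>X\<in>Om. calN N X = real m"
begin

sublocale W: prob_space walk_law by (rule walk_law_prob)

abbreviation "A x X \<equiv> Aen lam h N x X"
definition "G x X = indicator Om X * exp (A x X)"
definition "Z x = Zpart lam h N x Om"
definition "D y n = (\<integral>X. G y X * Delta X n \<partial>walk_law) / Z y"

lemma Z_eq: "Z x = (\<integral>X. G x X \<partial>walk_law)"
  unfolding Z_def Zpart_def G_def Aen_def by simp

lemma A_meas: "(\<lambda>X. A x X) \<in> borel_measurable walk_law"
  unfolding Aen_def using Delta_meas by measurable

lemma G_meas: "(\<lambda>X. G x X) \<in> borel_measurable walk_law"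
  unfolding G_def using A_meas Om by measurable

definition "B x = 2 * lam * (\<Sum>n=1..N. \<bar>x n + h\<bar>)"

lemma A_bound: "\<bar>A x X\<bar> \<le> B x"
proof -
  have "\<bar>\<Sum>n=1..N. (x n + h) * Delta X n\<bar> \<le> (\<Sum>n=1..N. \<bar>(x n + h) * Delta X n\<bar>)"
    by (rule sum_abs)
  also have "\<dots> \<le> (\<Sum>n=1..N. \<bar>x n + h\<bar>)"
    by (intro sum_mono) (use Delta_bounds[of X] in \<open>auto simp: abs_mult intro: mult_left_le\<close>)
  finally show ?thesis unfolding Aen_def B_def using lam
    by (simp add: abs_mult mult_left_mono)
qed

lemma G_nonneg: "0 \<le> G x X" unfolding G_def by simp

lemma G_bound: "G x X \<le> exp (B x)"
  unfolding G_def using A_bound[of x X]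
  by (auto simp: indicator_def)

lemma G_int: "integrable walk_law (\<lambda>X. G x X * f X)"
  if "f \<in> borel_measurable walk_law" "\<And>X. \<bar>f X\<bar> \<le> K" for f K
proof (rule W.integrable_const_bound[where B="exp (B x) * K"])
  show "AE X in walk_law. norm (G x X * f X) \<le> exp (B x) * K"
    using G_bound[of x] G_nonneg[of x] that(2)
    by (auto simp: abs_mult intro!: mult_mono)
  show "(\<lambda>X. G x X * f X) \<in> borel_measurable walk_law"
    using G_meas that(1) by measurable
qed

lemma G_int1: "integrable walk_law (\<lambda>X. G x X)"
  using G_int[of "\<lambda>_. 1" 1 x] by simp

lemma Z_pos: "Z x > 0"
proof -
  have "(\<integral>X. indicator Om X * exp (- B x) \<partial>walk_law) \<le> (\<integral>X. G x X \<partial>walk_law)"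
  proof (rule integral_mono)
    show "integrable walk_law (\<lambda>X. indicator Om X * exp (- B x))"
      using Om by (intro integrable_mult_left integrable_real_indicator) (simp_all add: W.emeasure_finite less_top[symmetric])
    show "integrable walk_law (G x)" using G_int1 by simp
    show "indicator Om X * exp (- B x) \<le> G x X" for X
      unfolding G_def using A_bound[of x X] by (auto simp: indicator_def)
  qed
  moreover have "(\<integral>X. indicator Om X * exp (- B x) \<partial>walk_law) = measure walk_law Om * exp (- B x)"
    using Om by (simp add: W.emeasure_finite)
  moreover have "measure walk_law Om * exp (- B x) > 0" using Ompos by simp
  ultimately show ?thesis unfolding Z_eq by linarith
qed


lemma GD_int: "integrable walk_law (\<lambda>X. G y X * Delta X n)"
  using G_int[of "\<lambda>X. Delta X n" 1 y] Delta_meas Delta_bounds by (simp add: abs_le_iff)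

lemma D_nonneg: "0 \<le> D y n"
  unfolding D_def using Z_pos[of y] G_nonneg Delta_bounds
  by (intro divide_nonneg_pos integral_nonneg) auto

lemma D_le1: "D y n \<le> 1"
proof -
  have "(\<integral>X. G y X * Delta X n \<partial>walk_law) \<le> (\<integral>X. G y X \<partial>walk_law)"
    using GD_int G_int1 G_nonneg Delta_bounds
    by (intro integral_mono) (auto intro: mult_left_le)
  then show ?thesis unfolding D_def Z_eq[symmetric] using Z_pos[of y] by simp
qed

lemma D_sum: "(\<Sum>n=1..N. D y n) = real m"
proof -
  have "(\<Sum>n=1..N. D y n) = (\<Sum>n=1..N. (\<integral>X. G y X * Delta X n \<partial>walk_law)) / Z y"
    unfolding D_def by (simp add: sum_divide_distrib)
  also have "(\<Sum>n=1..N. (\<integral>X. G y X * Delta X n \<partial>walk_law)) = (\<integral>X. (\<Sum>n=1..N. G y X * Delta X n) \<partial>walk_law)"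
    using GD_int by (simp add: integral_sum)
  also have "\<dots> = (\<integral>X. G y X * real m \<partial>walk_law)"
  proof (rule Bochner_Integration.integral_cong[OF refl])
    fix X
    show "(\<Sum>n=1..N. G y X * Delta X n) = G y X * real m"
    proof (cases "X \<in> Om")
      case True
      then show ?thesis using calN by (simp add: sum_distrib_left[symmetric] calN_def)
    next
      case False
      then show ?thesis by (simp add: G_def)
    qed
  qed
  also have "\<dots> = Z y * real m" by (simp add: Z_eq)
  finally show ?thesis using Z_pos[of y] by simp
qed

lemma A_diff: "A x X - A y X = - 2 * lam * (\<Sum>n=1..N. (x n - y n) * Delta X n)"
proof -
  have "(\<Sum>n=1..N. (x n + h) * Delta X n) - (\<Sum>n=1..N. (y n + h) * Delta X n) = (\<Sum>n=1..N. (x n - y n) * Delta X n)"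
    by (simp add: sum_subtractf[symmetric] algebra_simps)
  then show ?thesis unfolding Aen_def by (simp add: algebra_simps)
qed

lemma key: "ln (Z x) \<ge> ln (Z y) - 2 * lam * (\<Sum>n=1..N. (x n - y n) * D y n)"
proof -
  define c where "c = - 2 * lam * (\<Sum>n=1..N. (x n - y n) * D y n)"
  define f where "f X = A x X - A y X" for X
  have f_meas: "f \<in> borel_measurable walk_law" unfolding f_def using A_meas by measurable
  have f_bd: "\<bar>f X\<bar> \<le> B x + B y" for X unfolding f_def using A_bound[of x X] A_bound[of y X] by simp
  have Gf_int: "integrable walk_law (\<lambda>X. G y X * f X)" by (rule G_int[OF f_meas f_bd])
  have cZ: "(\<integral>X. G y X * f X \<partial>walk_law) = c * Z y"
  proof -
    have "(\<integral>X. G y X * f X \<partial>walk_law) = (\<integral>X. - 2 * lam * (\<Sum>n=1..N. (x n - y n) * (G y X * Delta X n)) \<partial>walk_law)"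
      unfolding f_def A_diff by (rule Bochner_Integration.integral_cong) (auto simp: sum_distrib_left algebra_simps)
    also have "\<dots> = - 2 * lam * (\<Sum>n=1..N. (x n - y n) * (\<integral>X. G y X * Delta X n \<partial>walk_law))"
      using GD_int by (simp add: integral_sum)
    also have "\<dots> = c * Z y" unfolding c_def D_def using Z_pos[of y]
      by (simp add: sum_distrib_right)
    finally show ?thesis .
  qed
  have pw: "exp c * (G y X + G y X * f X - c * G y X) \<le> G x X" for X
  proof -
    have "1 + (f X - c) \<le> exp (f X - c)" by (rule exp_ge_add_one_self)
    then have "exp c * (1 + (f X - c)) \<le> exp c * exp (f X - c)" by simp
    also have "\<dots> = exp (f X)" by (simp add: exp_diff)
    finally have "G y X * (exp c * (1 + (f X - c))) \<le> G y X * exp (f X)"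
      using G_nonneg by (intro mult_left_mono) auto
    moreover have "G y X * exp (f X) = G x X"
      unfolding G_def f_def by (simp add: exp_diff)
    ultimately show ?thesis by (simp add: algebra_simps)
  qed
  have "(\<integral>X. exp c * (G y X + G y X * f X - c * G y X) \<partial>walk_law) \<le> (\<integral>X. G x X \<partial>walk_law)"
    using pw G_int1 Gf_int by (intro integral_mono) auto
  moreover have "(\<integral>X. exp c * (G y X + G y X * f X - c * G y X) \<partial>walk_law) = exp c * (Z y + c * Z y - c * Z y)"
    using G_int1 Gf_int by (simp add: cZ Z_eq)
  ultimately have "exp c * Z y \<le> Z x" unfolding Z_eq by simp
  then have "ln (exp c * Z y) \<le> ln (Z x)" using Z_pos[of y] Z_pos[of x] by (subst ln_le_cancel_iff) auto
  then show ?thesis using Z_pos[of y] unfolding c_def by (simp add: ln_mult)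
qed


lemma CS: "\<bar>\<Sum>n=1..N. a n * D y n\<bar> \<le> sqrt (\<Sum>n=1..N. (a n)\<^sup>2) * sqrt (real m)"
proof -
  have "(\<Sum>n=1..N. a n * D y n)\<^sup>2 \<le> (\<Sum>n=1..N. (a n)\<^sup>2) * (\<Sum>n=1..N. (D y n)\<^sup>2)"
    by (rule Cauchy_Schwarz_ineq_sum)
  also have "(\<Sum>n=1..N. (D y n)\<^sup>2) \<le> (\<Sum>n=1..N. D y n)"
    using D_nonneg D_le1 by (intro sum_mono) (simp add: power2_eq_square mult_left_le)
  then have "(\<Sum>n=1..N. (a n)\<^sup>2) * (\<Sum>n=1..N. (D y n)\<^sup>2) \<le> (\<Sum>n=1..N. (a n)\<^sup>2) * real m"
    using D_sum by (intro mult_left_mono) (auto intro: sum_nonneg)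
  finally have "sqrt ((\<Sum>n=1..N. a n * D y n)\<^sup>2) \<le> sqrt ((\<Sum>n=1..N. (a n)\<^sup>2) * real m)"
    by (rule real_sqrt_le_mono)
  then show ?thesis by (simp add: real_sqrt_mult)
qed

lemma lower: "ln (Z x) - ln (Z y) \<ge> - (2 * lam * sqrt (real m)) * sqrt (\<Sum>n=1..N. (x n - y n)\<^sup>2)"
proof -
  have "2 * lam * (\<Sum>n=1..N. (x n - y n) * D y n) \<le> 2 * lam * \<bar>\<Sum>n=1..N. (x n - y n) * D y n\<bar>"
    using lam by (intro mult_left_mono) auto
  also have "\<dots> \<le> 2 * lam * (sqrt (\<Sum>n=1..N. (x n - y n)\<^sup>2) * sqrt (real m))"
    using lam CS[of "\<lambda>n. x n - y n" y] by (intro mult_left_mono) auto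
  finally show ?thesis using key[of y x] by (simp add: algebra_simps)
qed

lemma lip: "\<bar>ln (Z x) - ln (Z y)\<bar> \<le> (2 * lam * sqrt (real m)) * sqrt (\<Sum>n=1..N. (x n - y n)\<^sup>2)"
proof -
  have s: "(\<Sum>n=1..N. (y n - x n)\<^sup>2) = (\<Sum>n=1..N. (x n - y n)\<^sup>2)"
    by (intro sum.cong) (auto simp: power2_commute)
  define K where "K = (2 * lam * sqrt (real m)) * sqrt (\<Sum>n=1..N. (x n - y n)\<^sup>2)"
  have "- K \<le> ln (Z x) - ln (Z y)" "- K \<le> ln (Z y) - ln (Z x)"
    using lower[of x y] lower[of y x] unfolding s K_def by simp_all
  then show ?thesis unfolding K_def[symmetric] by (intro abs_leI) linarith+
qed

lemma degenerate: "lam = 0 \<or> m = 0 \<Longrightarrow> Z x = Z y"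
proof -
  assume a: "lam = 0 \<or> m = 0"
  have "ln (Z x) - ln (Z y) \<ge> 0" "ln (Z y) - ln (Z x) \<ge> 0"
    using lower[of x y] lower[of y x] a by auto
  then have "ln (Z x) = ln (Z y)" by linarith
  then show ?thesis using Z_pos[of x] Z_pos[of y] by simp
qed

lemma convex: "0 \<le> t \<Longrightarrow> t \<le> 1 \<Longrightarrow> ln (Z (\<lambda>i. t * x i + (1 - t) * y i)) \<le> t * ln (Z x) + (1 - t) * ln (Z y)"
proof -
  assume t: "0 \<le> t" "t \<le> 1"
  define p where "p = (\<lambda>i. t * x i + (1 - t) * y i)"
  have gen: "\<And>a K1 K2. t * (a - 2 * lam * K1) + (1 - t) * (a - 2 * lam * K2) = a - 2 * lam * (t * K1 + (1 - t) * K2)"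
    by (simp add: algebra_simps)
  have k1: "ln (Z x) \<ge> ln (Z p) - 2 * lam * (\<Sum>n=1..N. (x n - p n) * D p n)" by (rule key)
  have k2: "ln (Z y) \<ge> ln (Z p) - 2 * lam * (\<Sum>n=1..N. (y n - p n) * D p n)" by (rule key)
  have z: "t * (\<Sum>n=1..N. (x n - p n) * D p n) + (1 - t) * (\<Sum>n=1..N. (y n - p n) * D p n) = 0"
  proof -
    have "t * (\<Sum>n=1..N. (x n - p n) * D p n) + (1 - t) * (\<Sum>n=1..N. (y n - p n) * D p n)
        = (\<Sum>n=1..N. (t * (x n - p n) + (1 - t) * (y n - p n)) * D p n)"
      unfolding sum_distrib_left sum.distrib[symmetric] by (rule sum.cong) (auto simp: algebra_simps)
    also have "\<dots> = 0" by (intro sum.neutral) (auto simp: p_def algebra_simps)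
    finally show ?thesis .
  qed
  have e: "t * (ln (Z p) - 2 * lam * (\<Sum>n=1..N. (x n - p n) * D p n))
        + (1 - t) * (ln (Z p) - 2 * lam * (\<Sum>n=1..N. (y n - p n) * D p n)) = ln (Z p)"
    unfolding gen z by simp
  have "t * (ln (Z p) - 2 * lam * (\<Sum>n=1..N. (x n - p n) * D p n))
        + (1 - t) * (ln (Z p) - 2 * lam * (\<Sum>n=1..N. (y n - p n) * D p n)) \<le> t * ln (Z x) + (1 - t) * ln (Z y)"
    using t k1 k2 by (intro add_mono mult_left_mono) auto
  then have "ln (Z p) \<le> t * ln (Z x) + (1 - t) * ln (Z y)" unfolding e .
  then show ?thesis unfolding p_def .
qed

lemma Z_dep: "\<forall>i\<in>{1..N}. x i = y i \<Longrightarrow> Z x = Z y"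
proof -
  assume a: "\<forall>i\<in>{1..N}. x i = y i"
  have "A x X = A y X" for X unfolding Aen_def using a by (auto intro!: sum.cong)
  then show ?thesis unfolding Z_eq G_def by simp
qed

end

lemma C_ge1:
  assumes "prob_space \<mu>" and "deviation_above_mean \<mu> C" and "N > 0"
  shows "1 \<le> C"
proof -
  interpret P: prob_space "disorder_law \<mu>"
    unfolding disorder_law_def using assms(1) by (intro prob_space_PiM) auto
  have "measure (disorder_law \<mu>) {\<omega> \<in> space (disorder_law \<mu>).
            (\<lambda>_. 0::real) \<omega> - (\<integral>\<omega>'. (\<lambda>_. 0::real) \<omega>' \<partial>disorder_law \<mu>) \<ge> 0}
          \<le> C * exp (- (0\<^sup>2) / (C * 1\<^sup>2))"
    using assms(2) unfolding deviation_above_mean_def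
    by (elim conjE allE[of _ N] allE[of _ "\<lambda>_. 0"] allE[of _ 1] allE[of _ 0] mp)
       (simp add: depends_only_on_def convex_fun_def lipschitz_N_def)
  then show ?thesis by (simp add: P.prob_space)
qed

theorem lemma2p1:
  fixes \<mu> :: "real measure" and C lam h u :: real and N m :: nat
    and \<Omega>m :: "(nat \<Rightarrow> int) set"
  assumes "prob_space \<mu>" and "sets \<mu> = sets borel"
    and "deviation_above_mean \<mu> C"
    and "lam \<ge> 0" and "h \<ge> 0"
    and "even N" and "N > 0"
    and "even m" and "m \<le> N"
    and "\<Omega>m \<in> sets walk_law" and "measure walk_law \<Omega>m > 0"
    and "\<forall>X\<in>\<Omega>m. calN N X = real m"
    and "integrable (disorder_law \<mu>) (\<lambda>\<omega>. free_energy lam h N \<omega> \<Omega>m)"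
    and "u \<ge> 0"
  shows "measure (disorder_law \<mu>)
           {\<omega> \<in> space (disorder_law \<mu>).
              free_energy lam h N \<omega> \<Omega>m
                - (\<integral>\<omega>'. free_energy lam h N \<omega>' \<Omega>m \<partial>disorder_law \<mu>) \<ge> u}
         \<le> (if lam = 0 \<or> m = 0 then (if u > 0 then 0 else C)
            else C * exp (- (u^2 * (real N)^2) / (4 * C * lam^2 * real m)))"
proof -
  interpret S lam h N m \<Omega>m using assms by unfold_locales auto
  interpret P: prob_space "disorder_law \<mu>"
    unfolding disorder_law_def using assms(1) by (intro prob_space_PiM) auto
  define g where "g \<omega> = free_energy lam h N \<omega> \<Omega>m" for \<omega>
  have g_eq: "g \<omega> = ln (Z \<omega>) / real N" for \<omega> unfolding g_def free_energy_def Z_def by simp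
  have C1: "1 \<le> C" using C_ge1[OF assms(1,3,7)] .
  show ?thesis
  proof (cases "lam = 0 \<or> m = 0")
    case True
    have gc: "g \<omega> = g (\<lambda>_. 0)" for \<omega> unfolding g_eq using degenerate[OF True, of \<omega> "\<lambda>_. 0"] by simp
    have int: "(\<integral>\<omega>'. g \<omega>' \<partial>disorder_law \<mu>) = g (\<lambda>_. 0)"
      by (subst gc) (simp add: P.prob_space)
    show ?thesis
    proof (cases "u > 0")
      case True
      have "{\<omega> \<in> space (disorder_law \<mu>). g \<omega> - (\<integral>\<omega>'. g \<omega>' \<partial>disorder_law \<mu>) \<ge> u} = {}"
        using True unfolding int by (subst gc) auto
      then have "measure (disorder_law \<mu>) {\<omega> \<in> space (disorder_law \<mu>). g \<omega> - (\<integral>\<omega>'. g \<omega>' \<partial>disorder_law \<mu>) \<ge> u} = 0"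
        by (metis measure_empty)
      then show ?thesis using True \<open>lam = 0 \<or> m = 0\<close> unfolding g_def by simp
    next
      case False
      have "measure (disorder_law \<mu>) {\<omega> \<in> space (disorder_law \<mu>). g \<omega> - (\<integral>\<omega>'. g \<omega>' \<partial>disorder_law \<mu>) \<ge> u} \<le> 1"
        by (rule P.prob_le_1)
      then have "measure (disorder_law \<mu>) {\<omega> \<in> space (disorder_law \<mu>). g \<omega> - (\<integral>\<omega>'. g \<omega>' \<partial>disorder_law \<mu>) \<ge> u} \<le> C"
        using C1 by linarith
      then show ?thesis using False \<open>lam = 0 \<or> m = 0\<close> unfolding g_def by simp
    qed
  next
    case False
    then have lam0: "lam > 0" and m0: "m > 0" using assms(4) by auto
    define L where "L = 2 * lam * sqrt (real m) / real N"
    have L0: "L > 0" unfolding L_def using lam0 m0 assms(7) by simp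
    have dep: "depends_only_on N g"
      unfolding depends_only_on_def g_eq using Z_dep by metis
    have cvx: "convex_fun g"
      unfolding convex_fun_def g_eq
    proof (intro allI impI)
      fix x y and t :: real assume t: "0 \<le> t \<and> t \<le> 1"
      have "ln (Z (\<lambda>i. t * x i + (1 - t) * y i)) / real N \<le> (t * ln (Z x) + (1 - t) * ln (Z y)) / real N"
        using convex[of t x y] t assms(7) by (intro divide_right_mono) auto
      then show "ln (Z (\<lambda>i. t * x i + (1 - t) * y i)) / real N \<le> t * (ln (Z x) / real N) + (1 - t) * (ln (Z y) / real N)"
        by (simp add: add_divide_distrib)
    qed
    have lipg: "lipschitz_N N L g"
      unfolding lipschitz_N_def g_eq
    proof (intro allI)
      fix x y
      have "\<bar>ln (Z x) / real N - ln (Z y) / real N\<bar> = \<bar>ln (Z x) - ln (Z y)\<bar> / real N"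
        using assms(7) by (simp add: diff_divide_distrib[symmetric])
      also have "\<dots> \<le> (2 * lam * sqrt (real m)) * sqrt (\<Sum>n=1..N. (x n - y n)\<^sup>2) / real N"
        using lip[of x y] assms(7) by (intro divide_right_mono) auto
      also have "\<dots> = L * sqrt (\<Sum>i=1..N. (x i - y i)\<^sup>2)" unfolding L_def by simp
      finally show "\<bar>ln (Z x) / real N - ln (Z y) / real N\<bar> \<le> L * sqrt (\<Sum>i=1..N. (x i - y i)\<^sup>2)" .
    qed
    have intg: "integrable (disorder_law \<mu>) g" using assms(13) unfolding g_def .
    have main: "measure (disorder_law \<mu>) {\<omega> \<in> space (disorder_law \<mu>).
            g \<omega> - (\<integral>\<omega>'. g \<omega>' \<partial>disorder_law \<mu>) \<ge> u} \<le> C * exp (- (u\<^sup>2) / (C * L\<^sup>2))"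
      using assms(3) dep cvx L0 lipg intg assms(14) unfolding deviation_above_mean_def by blast
    have "- (u\<^sup>2) / (C * L\<^sup>2) = - (u^2 * (real N)^2) / (4 * C * lam^2 * real m)"
      unfolding L_def using assms(7) m0 by (simp add: power_divide power_mult_distrib field_simps)
    then show ?thesis using main False unfolding g_def by simp
  qed
qed

end
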